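(* Let $n$ agents have additive $\alpha$-ratio-bounded cost functions ($\alpha\ge1$) over chores $[m]$, and let $\ell=\lceil m/n\rceil\ge3$. Then the full allocation produced by the round-robin procedure (with any fixed ordering of agents and any tie-breaking) is $\left(1+\frac{\alpha-1}{\ell-1}\right)$-EFX.
   Context: A cost function $C:2^{[m]}\to\mathbb{R}_{\ge0}$ is additive if $C(S)=\sum_{c\in S}C(\{c\})$, and $\alpha$-ratio-bounded if $\max_b C(\{b\})/\min_b C(\{b\})\le\alpha$ (positive single-chore costs). Round-robin: fix an ordering $i_1,\dots,i_n$ of agents; in successive rounds, for $t=1,\dots,n$, agent $i_t$ takes a chore of minimum cost to itself among the remaining unallocated chores, until all chores are allocated (so there are $\lceil m/n\rceil$ rounds, the last possibly incomplete). An allocation is $\gamma$-EFX if for all agents $i,j$ and every $c\in X_i$, $C_i(X_i\setminus\{c\})\le\gamma\,C_i(X_j)$. *)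

theory Defs
  imports Complex_Main
begin

text \<open>Agents are 0..n-1, chores are 0..m-1. C i c is the cost of chore c for agent i;
  additive: cost of a bundle S is the sum over S.\<close>

definition cost :: "(nat \<Rightarrow> nat \<Rightarrow> real) \<Rightarrow> nat \<Rightarrow> nat set \<Rightarrow> real" where
  "cost C i S = (\<Sum>c\<in>S. C i c)"

definition ratio_bounded :: "nat \<Rightarrow> real \<Rightarrow> (nat \<Rightarrow> real) \<Rightarrow> bool" where
  "ratio_bounded m \<alpha> c \<longleftrightarrow> (\<forall>b<m. c b > 0) \<and>
     Max (c ` {..<m}) / Min (c ` {..<m}) \<le> \<alpha>"

text \<open>A run of round-robin with ordering \<sigma> (a permutation of the agents, \<sigma> t = agent in
  position t of each round) and some tie-breaking: p k is the chore taken at step k (k < m);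
  step k is performed by agent \<sigma> (k mod n), who takes a chore of minimum own cost among
  the chores not yet taken.\<close>

definition round_robin_run ::
  "nat \<Rightarrow> nat \<Rightarrow> (nat \<Rightarrow> nat \<Rightarrow> real) \<Rightarrow> (nat \<Rightarrow> nat) \<Rightarrow> (nat \<Rightarrow> nat) \<Rightarrow> bool" where
  "round_robin_run n m C \<sigma> p \<longleftrightarrow>
     bij_betw p {..<m} {..<m} \<and>
     (\<forall>k<m. \<forall>c\<in>{..<m} - p ` {..<k}. C (\<sigma> (k mod n)) (p k) \<le> C (\<sigma> (k mod n)) c)"

definition rr_bundle :: "nat \<Rightarrow> nat \<Rightarrow> (nat \<Rightarrow> nat) \<Rightarrow> (nat \<Rightarrow> nat) \<Rightarrow> nat \<Rightarrow> nat set" where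
  "rr_bundle n m \<sigma> p i = p ` {k. k < m \<and> \<sigma> (k mod n) = i}"

definition EFX_approx ::
  "nat \<Rightarrow> (nat \<Rightarrow> nat \<Rightarrow> real) \<Rightarrow> real \<Rightarrow> (nat \<Rightarrow> nat set) \<Rightarrow> bool" where
  "EFX_approx n C \<gamma> X \<longleftrightarrow>
     (\<forall>i<n. \<forall>j<n. \<forall>c\<in>X i. cost C i (X i - {c}) \<le> \<gamma> * cost C i (X j))"

end

theory Submission
  imports Defs
begin

lemma mod_close_eq:
  fixes a b n :: nat
  assumes "a \<le> b" "b < a + n" "a mod n = b mod n"
  shows "a = b"
proof -
  have "n dvd (b - a)" using assms mod_eq_dvd_iff_nat by metis
  moreover have "b - a < n" using assms by linarith
  ultimately have "b - a = 0" by (metis nat_dvd_not_less neq0_conv)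
  thus ?thesis using assms by linarith
qed

lemma card_le1:
  fixes B :: "nat set" and n m d t :: nat
  assumes "B \<subseteq> {k. k < m \<and> k mod n = t \<and> m \<le> k + d}" "d < n"
  shows "card B \<le> 1"
proof -
  have "\<forall>x\<in>B. \<forall>y\<in>B. x = y"
  proof (intro ballI)
    fix x y assume "x \<in> B" "y \<in> B"
    hence hx: "x < m" "x mod n = t" "m \<le> x + d" and hy: "y < m" "y mod n = t" "m \<le> y + d"
      using assms by auto
    show "x = y"
    proof (cases "x \<le> y")
      case True thus ?thesis using mod_close_eq[of x y n] hx hy assms by linarith
    next
      case False thus ?thesis using mod_close_eq[of y x n] hx hy assms by linarith
    qed
  qed
  moreover have "finite B" using assms(1) by (rule finite_subset) auto
  ultimately show ?thesis by (simp add: card_le_Suc0_iff_eq)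
qed

lemma shiftL: fixes s t n k :: nat assumes "s < n" "t < n" "k mod n = t" 
  shows "(k + (if t \<le> s then s - t else s + n - t)) mod n = s"
proof -
  have k: "k = n * (k div n) + t" using assms(3) by (metis div_mult_mod_eq mult.commute)
  show ?thesis
  proof (cases "t \<le> s")
    case True
    hence "k + (s - t) = s + n * (k div n)" using k by linarith
    thus ?thesis using True assms(1) by simp
  next
    case False
    have h: "(s + n * q) mod n = s" for q using assms(1) by simp
    have "k + (s + n - t) = s + n * (k div n + 1)" using k assms False by (simp add: algebra_simps)
    hence "(k + (s + n - t)) mod n = s" using h by metis
    thus ?thesis using False by simp
  qed
qed

theorem mainTheorem9:
  fixes n m :: nat and \<alpha> :: real and C :: "nat \<Rightarrow> nat \<Rightarrow> real"
    and \<sigma> p :: "nat \<Rightarrow> nat"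
  assumes "n \<ge> 1"
    and "\<alpha> \<ge> 1"
    and "\<forall>i<n. ratio_bounded m \<alpha> (C i)"
    and "\<lceil>real m / real n\<rceil> \<ge> 3"
    and "bij_betw \<sigma> {..<n} {..<n}"
    and "round_robin_run n m C \<sigma> p"
  shows "EFX_approx n C (1 + (\<alpha> - 1) / (real_of_int \<lceil>real m / real n\<rceil> - 1)) (rr_bundle n m \<sigma> p)"
proof -
  define ll where "ll = real_of_int \<lceil>real m / real n\<rceil>"
  define gg where "gg = 1 + (\<alpha> - 1) / (ll - 1)"
  have l3: "ll \<ge> 3" using assms(4) unfolding ll_def by linarith
  have np: "real n > 0" using assms(1) by simp
  have lt: "ll - 1 < real m / real n" unfolding ll_def by linarith
  hence lm: "(ll - 1) * real n < real m" using np by (simp add: field_simps)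
  have mpos: "m > 0"
  proof (rule ccontr)
    assume "\<not> m > 0"
    hence "real m = 0" by simp
    moreover have "(ll - 1) * real n > 0" using l3 np by simp
    ultimately show False using lm by simp
  qed
  have pinj: "inj_on p {..<m}" and pimg: "p ` {..<m} = {..<m}"
    and pick: "\<And>k c. k < m \<Longrightarrow> c \<in> {..<m} - p ` {..<k} \<Longrightarrow> C (\<sigma> (k mod n)) (p k) \<le> C (\<sigma> (k mod n)) c"
    using assms(6) unfolding round_robin_run_def bij_betw_def by auto
  have ggge: "gg \<ge> 1" unfolding gg_def using assms(2) l3 by simp
  define K where "K a = {k. k < m \<and> \<sigma> (k mod n) = a}" for a
  have bund: "rr_bundle n m \<sigma> p a = p ` K a" for a unfolding rr_bundle_def K_def by simp
  have Kfin: "finite (K a)" for a unfolding K_def by simp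
  have costK: "cost C i (rr_bundle n m \<sigma> p a) = (\<Sum>k\<in>K a. C i (p k))" for i a
    unfolding cost_def bund
    by (rule sum.reindex_cong[where l=p]) (auto intro: inj_on_subset[OF pinj] simp: K_def)
  have sinj: "inj_on \<sigma> {..<n}" and simg: "\<sigma> ` {..<n} = {..<n}" using assms(5) by (auto simp: bij_betw_def)
  have Kpos: "K a = {k. k < m \<and> k mod n = s}" if "s < n" "\<sigma> s = a" for a s
  proof -
    have "\<sigma> (k mod n) = \<sigma> s \<longleftrightarrow> k mod n = s" for k
      using sinj that np by (auto simp: inj_on_def)
    thus ?thesis unfolding K_def using that by auto
  qed
  show ?thesis unfolding EFX_approx_def gg_def[symmetric] ll_def[symmetric]
  proof (intro allI impI ballI)
    fix i j c assume i: "i < n" and j: "j < n" and c: "c \<in> rr_bundle n m \<sigma> p i"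
    have rb: "\<forall>b<m. C i b > 0" "Max (C i ` {..<m}) / Min (C i ` {..<m}) \<le> \<alpha>"
      using assms(3) i unfolding ratio_bounded_def by auto
    define \<mu> where "\<mu> = Min (C i ` {..<m})"
    have mu_le: "\<And>b. b < m \<Longrightarrow> \<mu> \<le> C i b" unfolding \<mu>_def by simp
    have mu_pos: "\<mu> > 0" unfolding \<mu>_def using rb(1) mpos by (subst Min_gr_iff) auto
    have ub: "\<And>b. b < m \<Longrightarrow> C i b \<le> \<alpha> * \<mu>"
    proof -
      fix b assume b: "b < m"
      have "C i b \<le> Max (C i ` {..<m})" using b by simp
      also have "\<dots> \<le> \<alpha> * \<mu>" using rb(2) mu_pos unfolding \<mu>_def[symmetric] by (simp add: field_simps)
      finally show "C i b \<le> \<alpha> * \<mu>" .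
    qed
    have Kin: "\<And>k a. k \<in> K a \<Longrightarrow> p k < m" using pimg unfolding K_def by auto
    have cm: "c < m" using c unfolding bund using Kin by auto
    have Xfin: "finite (rr_bundle n m \<sigma> p i)" unfolding bund using Kfin by simp
    have cost_rm: "cost C i (rr_bundle n m \<sigma> p i - {c}) = cost C i (rr_bundle n m \<sigma> p i) - C i c"
      unfolding cost_def using Xfin c by (simp add: sum_diff1)
    have nonneg: "\<And>b. b < m \<Longrightarrow> 0 \<le> C i b" using rb(1) by (simp add: less_imp_le)
    show "cost C i (rr_bundle n m \<sigma> p i - {c}) \<le> gg * cost C i (rr_bundle n m \<sigma> p j)"
    proof (cases "i = j")
      case True
      have "cost C i (rr_bundle n m \<sigma> p i - {c}) \<le> cost C i (rr_bundle n m \<sigma> p i)"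
        using cost_rm nonneg cm by simp
      also have "\<dots> \<le> gg * cost C i (rr_bundle n m \<sigma> p i)"
      proof -
        have "0 \<le> cost C i (rr_bundle n m \<sigma> p i)"
          unfolding costK by (rule sum_nonneg) (use nonneg Kin in blast)
        thus ?thesis using ggge by (simp add: mult_right_mono[of 1 gg, simplified])
      qed
      finally show ?thesis using True by simp
    next
      case False
      obtain t where t: "t < n" "\<sigma> t = i" using i simg by (metis imageE lessThan_iff)
      obtain s where s: "s < n" "\<sigma> s = j" using j simg by (metis imageE lessThan_iff)
      have Ki: "K i = {k. k < m \<and> k mod n = t}" using Kpos t by blast
      have Kj: "K j = {k. k < m \<and> k mod n = s}" using Kpos s by blast
      have st: "s \<noteq> t" using False s t by auto
      define d where "d = (if t \<le> s then s - t else s + n - t)"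
      have dn: "d < n" unfolding d_def using s t by auto
      have dpos: "d > 0" unfolding d_def using st s t by auto
      have shift: "(k + d) mod n = s" if "k mod n = t" for k
        unfolding d_def by (rule shiftL[OF s(1) t(1) that])
      define A where "A = {k \<in> K i. k + d < m}"
      define B where "B = {k \<in> K i. m \<le> k + d}"
      have AB: "K i = A \<union> B" "A \<inter> B = {}" unfolding A_def B_def by auto
      have finA: "finite A" "finite B" unfolding A_def B_def using Kfin by auto
      have cardB: "card B \<le> 1"
        by (rule card_le1[of B m n t d]) (use dn in \<open>auto simp: B_def Ki\<close>)
      have sumA: "(\<Sum>k\<in>A. C i (p k)) \<le> (\<Sum>k\<in>K j. C i (p k))"
      proof -
        have "(\<Sum>k\<in>A. C i (p k)) \<le> (\<Sum>k\<in>A. C i (p (k + d)))"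
        proof (rule sum_mono)
          fix k assume k: "k \<in> A"
          hence km: "k < m" "k + d < m" "k mod n = t" unfolding A_def Ki by auto
          have "p (k + d) \<in> {..<m} - p ` {..<k}"
          proof -
            have "p (k+d) \<in> {..<m}" using km pimg by auto
            moreover have "p (k+d) \<notin> p ` {..<k}"
            proof
              assume "p (k+d) \<in> p ` {..<k}"
              then obtain x where x: "x < k" "p (k+d) = p x" by auto
              hence "k + d = x" using pinj km by (auto simp: inj_on_def)
              thus False using x dpos by simp
            qed
            ultimately show ?thesis by simp
          qed
          from pick[OF km(1) this] show "C i (p k) \<le> C i (p (k + d))" using km t by simp
        qed
        also have "\<dots> = (\<Sum>k\<in>(\<lambda>k. k + d) ` A. C i (p k))"
          by (simp add: sum.reindex)
        also have "\<dots> \<le> (\<Sum>k\<in>K j. C i (p k))"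
        proof (rule sum_mono2)
          show "finite (K j)" by (rule Kfin)
          show "(\<lambda>k. k + d) ` A \<subseteq> K j" unfolding A_def Ki Kj using shift by auto
          show "\<And>b. b \<in> K j - (\<lambda>k. k + d) ` A \<Longrightarrow> 0 \<le> C i (p b)" using nonneg Kin by blast
        qed
        finally show ?thesis .
      qed
      have sumB: "(\<Sum>k\<in>B. C i (p k)) \<le> real (card B) * (\<alpha> * \<mu>)"
      proof -
        have "(\<Sum>k\<in>B. C i (p k)) \<le> (\<Sum>k\<in>B. \<alpha> * \<mu>)"
          by (rule sum_mono) (use ub Kin in \<open>auto simp: B_def\<close>)
        thus ?thesis by simp
      qed
      have amu: "\<alpha> * \<mu> \<ge> 0" using assms(2) mu_pos by simp
      have sumB2: "(\<Sum>k\<in>B. C i (p k)) \<le> \<alpha> * \<mu>"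
      proof -
        have "real (card B) * (\<alpha> * \<mu>) \<le> 1 * (\<alpha> * \<mu>)"
          using cardB amu by (intro mult_right_mono) auto
        thus ?thesis using sumB by simp
      qed
      define T where "T = (\<Sum>k\<in>K j. C i (p k))"
      have Xi: "cost C i (rr_bundle n m \<sigma> p i) = (\<Sum>k\<in>A. C i (p k)) + (\<Sum>k\<in>B. C i (p k))"
        using costK[of i i] AB finA by (simp add: sum.union_disjoint)
      have main1: "cost C i (rr_bundle n m \<sigma> p i - {c}) \<le> T + (\<alpha> - 1) * \<mu>"
        using cost_rm Xi sumA sumB2 mu_le[OF cm] unfolding T_def by (simp add: algebra_simps)
      define L where "L = nat \<lceil>real m / real n\<rceil>"
      have Ll: "real L = ll" unfolding L_def ll_def using l3 ll_def by simp
      have L3: "L \<ge> 3" using Ll l3 by linarith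
      have Lnm: "(L - 1) * n < m"
      proof -
        have "real ((L - 1) * n) = (ll - 1) * real n" using L3 Ll by (simp add: of_nat_diff)
        thus ?thesis using lm by linarith
      qed
      have cardKj: "card (K j) \<ge> L - 1"
      proof -
        have sub: "(\<lambda>q. s + q * n) ` {..<L - 1} \<subseteq> K j"
        proof
          fix x assume "x \<in> (\<lambda>q. s + q * n) ` {..<L - 1}"
          then obtain q where q: "q < L - 1" "x = s + q * n" by auto
          have "s + q * n < n + q * n" using s by simp
          also have "\<dots> = (q + 1) * n" by simp
          also have "\<dots> \<le> (L - 1) * n" using q by (intro mult_right_mono) auto
          finally have "x < m" using Lnm q by linarith
          moreover have "x mod n = s" using q s by simp
          ultimately show "x \<in> K j" unfolding Kj by simp
        qed
        have inj: "inj_on (\<lambda>q. s + q * n) {..<L - 1}" using assms(1) by (auto simp: inj_on_def)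
        have "card {..<L - 1} \<le> card (K j)"
          by (rule card_inj_on_le[OF inj sub Kfin])
        thus ?thesis by simp
      qed
      have Tge: "T \<ge> (ll - 1) * \<mu>"
      proof -
        have "(\<Sum>k\<in>K j. \<mu>) \<le> T" unfolding T_def
          by (rule sum_mono) (use mu_le Kin in blast)
        hence "real (card (K j)) * \<mu> \<le> T" by simp
        moreover have "(ll - 1) * \<mu> \<le> real (card (K j)) * \<mu>"
        proof -
          have "ll - 1 = real (L - 1)" using Ll L3 by (simp add: of_nat_diff)
          also have "\<dots> \<le> real (card (K j))" using cardKj by simp
          finally show ?thesis using mu_pos by (intro mult_right_mono) auto
        qed
        ultimately show ?thesis by linarith
      qed
      have "(\<alpha> - 1) * \<mu> \<le> (\<alpha> - 1) / (ll - 1) * T"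
      proof -
        have "(\<alpha> - 1) * ((ll - 1) * \<mu>) \<le> (\<alpha> - 1) * T" using Tge assms(2) by (intro mult_left_mono) auto
        thus ?thesis using l3 by (simp add: field_simps)
      qed
      hence "cost C i (rr_bundle n m \<sigma> p i - {c}) \<le> gg * T"
        using main1 unfolding gg_def by (simp add: algebra_simps)
      thus ?thesis using costK[of i j] unfolding T_def by simp
    qed
  qed
qed

end
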